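(* Let $G=(V,E)$ be a finite simple undirected graph, with a (possibly empty) set of boundary vertices $\partial G\subseteq V$, each boundary vertex having degree exactly one. Let $\mathring V=V\setminus\partial G$ and let $\mathring E$ be the set of edges with both endpoints in $\mathring V$. Give each edge $e$ an arbitrary orientation $e=(u,v)$ and a coordinate $x_e\in[0,1]$ with $x_e=0$ at $u$ and $x_e=1$ at $v$; for a vertex $v$ incident to $e$ write $x_{e,v}\in\{0,1\}$ for the value of $x_e$ at $v$. Let $f$ be a real function on the geometric realization (unit-length edges) such that for each edge $e$ there are real constants $C(e),B(e)$ with $f(e,x_e)=C(e)\cos(B(e)+\pi x_e)$ for $x_e\in[0,1]$, such that $f$ vanishes at every vertex (i.e. $f(e,x_{e,v})=0$ for every edge $e$ and endpoint $v$), and such that $f$ is edge-based, i.e. for every vertex $v\in V$ $$\sum_{e\ni v}(-1)^{1-x_{e,v}}\frac{\partial f}{\partial x_e}(e,x_{e,v})=0.$$ Then $f$ vanishes identically on every edge not in $\mathring E$, and for each $e\in\mathring E$ there is a real constant $D(e)$ with $f(e,x_e)=D(e)\cos(\tfrac{\pi}{2}+\pi x_e)$, where $$\sum_{e\ni v,\ e\in\mathring E}D(e)=0\quad\text{for all } v\in\mathring V.$$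
   Context: The factor $(-1)^{1-x_{e,v}}$ turns the derivative along $x_e$ into the outward-pointing derivative at $v$; the edge-based condition says the outward derivatives of $f$ at each vertex sum to zero (the vertex-based Laplacian of $f$ vanishes). Such $f$ are the eigenfunctions of the edge-based Laplacian $\Delta_E f=-f''$ with frequency $\omega=\pi$ (eigenvalue $\pi^2$) that are zero on the vertices. *)

theory Defs
  imports "HOL-Analysis.Analysis"
begin

text \<open>A finite simple undirected graph on vertex set V, each undirected edge
  given exactly once with an arbitrary orientation (u,v): no loops and never
  both (u,v) and (v,u).\<close>
definition oriented_simple_graph :: "'v set \<Rightarrow> ('v \<times> 'v) set \<Rightarrow> bool" where
  "oriented_simple_graph V E \<longleftrightarrow> finite V \<and> E \<subseteq> V \<times> V \<and>
     (\<forall>(u,v)\<in>E. u \<noteq> v \<and> (v,u) \<notin> E)"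

definition incident :: "'v \<Rightarrow> ('v \<times> 'v) \<Rightarrow> bool" where
  "incident v e \<longleftrightarrow> fst e = v \<or> snd e = v"

definition degree :: "('v \<times> 'v) set \<Rightarrow> 'v \<Rightarrow> nat" where
  "degree E v = card {e \<in> E. incident v e}"

definition interior_edges :: "('v \<times> 'v) set \<Rightarrow> 'v set \<Rightarrow> ('v \<times> 'v) set" where
  "interior_edges E Bd = {e \<in> E. fst e \<notin> Bd \<and> snd e \<notin> Bd}"

definition edge_deriv :: "(real \<Rightarrow> real) \<Rightarrow> real \<Rightarrow> real" where
  "edge_deriv g x = (THE D. (g has_real_derivative D) (at x within {0..1}))"

text \<open>Edge-based condition: sum over incident edges of (-1)^(1 - x_{e,v}) times
  the derivative at v; x_{e,v} = 0 at the tail fst e, 1 at the head snd e.\<close>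
definition edge_based :: "'v set \<Rightarrow> ('v \<times> 'v) set \<Rightarrow> ('v \<times> 'v \<Rightarrow> real \<Rightarrow> real) \<Rightarrow> bool" where
  "edge_based V E f \<longleftrightarrow> (\<forall>v\<in>V.
     (\<Sum>e\<in>{e\<in>E. incident v e}.
        (if snd e = v then edge_deriv (f e) 1 else 0) -
        (if fst e = v then edge_deriv (f e) 0 else 0)) = 0)"

end

theory Submission
  imports Defs
begin

lemma cos_form_D:
  assumes "\<forall>x\<in>{0..1}. g x = C * cos (B + pi * x)" "g 0 = 0"
  shows "\<forall>x\<in>{0..1}. g x = (- g (1/2)) * cos (pi / 2 + pi * x)"
proof -
  have c0: "C * cos B = 0" using assms by auto
  have h: "g x = - (C * sin B) * sin (pi * x)" if "x \<in> {0..1}" for x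
  proof -
    have "g x = C * (cos B * cos (pi*x) - sin B * sin (pi*x))"
      using assms(1) that by (simp add: cos_add)
    also have "\<dots> = (C * cos B) * cos (pi*x) - (C * sin B) * sin (pi*x)"
      by (simp add: algebra_simps)
    finally show ?thesis using c0 by simp
  qed
  have "g (1/2) = - (C * sin B)" using h[of "1/2"] by simp
  then show ?thesis using h by (simp add: cos_add)
qed

lemma edge_deriv_cos:
  assumes "\<forall>x\<in>{0..1}. g x = D * cos (pi / 2 + pi * x)"
  shows "edge_deriv g 0 = - D * pi" "edge_deriv g 1 = D * pi"
proof -
  have der: "(g has_real_derivative (- D * pi * sin (pi/2 + pi*y))) (at y within {0..1})"
    if "y \<in> {0..1}" for y
  proof -
    have "((\<lambda>x. D * cos (pi / 2 + pi * x)) has_real_derivative (- D * pi * sin (pi/2 + pi*y))) (at y within {0..1})"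
      by (auto intro!: derivative_eq_intros)
    then show ?thesis
      using assms that
      by (auto intro: has_field_derivative_transform_within[where d=1])
  qed
  have nb0: "at (0::real) within {0..1} \<noteq> bot"
    by (simp add: at_within_Icc_at_right)
  have nb1: "at (1::real) within {0..1} \<noteq> bot"
    by (simp add: at_within_Icc_at_left)
  have "edge_deriv g 0 = - D * pi * sin (pi/2 + pi*0)"
    unfolding edge_deriv_def
    by (rule the_equality, rule der, simp) (metis der has_field_derivative_unique nb0 atLeastAtMost_iff order_refl zero_le_one)
  then show "edge_deriv g 0 = - D * pi" by simp
  have "edge_deriv g 1 = - D * pi * sin (pi/2 + pi*1)"
    unfolding edge_deriv_def
    by (rule the_equality, rule der, simp) (metis der has_field_derivative_unique nb1 atLeastAtMost_iff order_refl zero_le_one)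
  moreover have "sin (pi/2 + pi*1) = -1"
    using sin_periodic_pi[of "pi/2"] by (simp only: mult_1_right) simp
  ultimately show "edge_deriv g 1 = D * pi" by simp
qed

theorem mainTheorem2:
  fixes V :: "'v set" and E :: "('v \<times> 'v) set" and Bd :: "'v set"
    and f :: "'v \<times> 'v \<Rightarrow> real \<Rightarrow> real"
  assumes graph: "oriented_simple_graph V E"
    and bd_sub: "Bd \<subseteq> V"
    and bd_deg: "\<forall>v\<in>Bd. degree E v = 1"
    and cos_form: "\<forall>e\<in>E. \<exists>C B. \<forall>x\<in>{0..1}. f e x = C * cos (B + pi * x)"
    and vanish: "\<forall>e\<in>E. f e 0 = 0 \<and> f e 1 = 0"
    and eb: "edge_based V E f"
  shows "(\<forall>e\<in>E - interior_edges E Bd. \<forall>x\<in>{0..1}. f e x = 0) \<and>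
         (\<exists>D :: 'v \<times> 'v \<Rightarrow> real.
            (\<forall>e\<in>interior_edges E Bd. \<forall>x\<in>{0..1}. f e x = D e * cos (pi / 2 + pi * x)) \<and>
            (\<forall>v\<in>V - Bd. (\<Sum>e\<in>{e\<in>interior_edges E Bd. incident v e}. D e) = 0))"
proof -
  define D where "D e = - f e (1/2)" for e
  have finE: "finite E" using graph unfolding oriented_simple_graph_def
    by (metis finite_SigmaI finite_subset)
  have noloop: "fst e \<noteq> snd e" if "e \<in> E" for e
    using graph that unfolding oriented_simple_graph_def by auto
  have fD: "\<forall>x\<in>{0..1}. f e x = D e * cos (pi / 2 + pi * x)" if eE: "e \<in> E" for e
  proof -
    obtain C B where "\<forall>x\<in>{0..1}. f e x = C * cos (B + pi * x)" using cos_form eE by blast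
    moreover have "f e 0 = 0" using vanish eE by blast
    ultimately have "\<forall>x\<in>{0..1}. f e x = (- f e (1/2)) * cos (pi / 2 + pi * x)" by (rule cos_form_D)
    then show ?thesis unfolding D_def by blast
  qed
  have sumD: "(\<Sum>e\<in>{e\<in>E. incident v e}. D e) = 0" if "v \<in> V" for v
  proof -
    have "(\<Sum>e\<in>{e\<in>E. incident v e}.
        (if snd e = v then edge_deriv (f e) 1 else 0) -
        (if fst e = v then edge_deriv (f e) 0 else 0)) = 0"
      using eb that unfolding edge_based_def by blast
    also have "(\<Sum>e\<in>{e\<in>E. incident v e}.
        (if snd e = v then edge_deriv (f e) 1 else 0) -
        (if fst e = v then edge_deriv (f e) 0 else 0)) = (\<Sum>e\<in>{e\<in>E. incident v e}. pi * D e)"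
    proof (rule sum.cong[OF refl])
      fix e assume e: "e \<in> {e\<in>E. incident v e}"
      then have "e \<in> E" by simp
      note d = edge_deriv_cos[OF fD[OF this]]
      show "(if snd e = v then edge_deriv (f e) 1 else 0) -
        (if fst e = v then edge_deriv (f e) 0 else 0) = pi * D e"
        using e noloop[of e] d unfolding incident_def by (auto simp del: mult_minus_left)
    qed
    also have "\<dots> = pi * (\<Sum>e\<in>{e\<in>E. incident v e}. D e)"
      by (rule sum_distrib_left[symmetric])
    finally show ?thesis by simp
  qed
  have bd0: "D e = 0" if "e \<in> E" "w \<in> Bd" "incident w e" for e w
  proof -
    have "card {e \<in> E. incident w e} = 1" using bd_deg that unfolding degree_def by blast
    then obtain e0 where e0: "{e \<in> E. incident w e} = {e0}" using card_1_singletonE by blast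
    have "e = e0" using e0 that by blast
    moreover have "D e0 = 0" using sumD[of w] e0 that bd_sub by auto
    ultimately show ?thesis by simp
  qed
  have part1: "\<forall>e\<in>E - interior_edges E Bd. \<forall>x\<in>{0..1}. f e x = 0"
  proof (intro ballI)
    fix e x assume e: "e \<in> E - interior_edges E Bd" and x: "x \<in> {0..1::real}"
    then obtain w where "w \<in> Bd" "incident w e"
      unfolding interior_edges_def incident_def by auto
    moreover have eE: "e \<in> E" using e by blast
    ultimately have "D e = 0" using bd0 by blast
    then show "f e x = 0" using fD[OF eE] x by simp
  qed
  have part2: "\<forall>v\<in>V - Bd. (\<Sum>e\<in>{e\<in>interior_edges E Bd. incident v e}. D e) = 0"
  proof
    fix v assume v: "v \<in> V - Bd"
    have "(\<Sum>e\<in>{e\<in>interior_edges E Bd. incident v e}. D e) = (\<Sum>e\<in>{e\<in>E. incident v e}. D e)"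
    proof (rule sum.mono_neutral_left)
      show "finite {e \<in> E. incident v e}" using finE by simp
      show "{e \<in> interior_edges E Bd. incident v e} \<subseteq> {e \<in> E. incident v e}"
        unfolding interior_edges_def by auto
      show "\<forall>i\<in>{e \<in> E. incident v e} - {e \<in> interior_edges E Bd. incident v e}. D i = 0"
      proof
        fix e assume e: "e \<in> {e \<in> E. incident v e} - {e \<in> interior_edges E Bd. incident v e}"
        then obtain w where "w \<in> Bd" "incident w e"
          unfolding interior_edges_def incident_def by auto
        moreover have eE: "e \<in> E" using e by blast
        ultimately show "D e = 0" using bd0 by blast
      qed
    qed
    then show "(\<Sum>e\<in>{e\<in>interior_edges E Bd. incident v e}. D e) = 0" using sumD v by simp
  qed
  have "\<forall>e\<in>interior_edges E Bd. \<forall>x\<in>{0..1}. f e x = D e * cos (pi / 2 + pi * x)"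
    using fD unfolding interior_edges_def by blast
  then show ?thesis using part1 part2 by blast
qed

end
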